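(* Let $z$ be an indeterminate and $c=1+(q-1)z$. For every $n\ge0$, $$\frac{1}{z}\int_0^z\beta_n(y)\,dy=\frac{1}{(q-1)^n}\sum_{k=0}^{n}\binom{n}{k}(-1)^{n-k}\frac{[k+1]_c}{[k+1]_q}.$$
   Context: $q$ is an indeterminate. The $q$-Bernoulli–Carlitz numbers $\beta_n\in\mathbb{Q}(q)$ are defined by: for all $n\ge0$, $q\sum_{k=0}^{n}\binom{n}{k}q^k\beta_k-\beta_n$ equals $q-1$ if $n=0$, $1$ if $n=1$, and $0$ if $n>1$. Let $\Psi$ be the $\mathbb{Q}(q)$-linear form on $\mathbb{Q}(q)[x]$ with $\Psi(x^n)=\beta_n$, extended $\mathbb{Q}(q)[z]$-linearly to $\mathbb{Q}(q)[z][x]$. The $q$-Bernoulli–Carlitz polynomials are $\beta_n(z)=\Psi\big((z+(z(q-1)+1)x)^n\big)\in\mathbb{Q}(q)[z]$, and $\int_0^z\beta_n(y)\,dy$ is the ordinary integral of this polynomial. $[m]_q=(q^m-1)/(q-1)$ and $[m]_c=(c^m-1)/(c-1)=1+c+\dots+c^{m-1}$. *)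

theory Defs
  imports "HOL-Computational_Algebra.Polynomial" "HOL-Computational_Algebra.Fraction_Field"
begin

type_synonym Qq = "rat poly fract"

definition qvar :: Qq where "qvar = Fract [:0, 1:] 1"

definition is_qBC_numbers :: "(nat \<Rightarrow> Qq) \<Rightarrow> bool" where
  "is_qBC_numbers \<beta> \<longleftrightarrow> (\<forall>n.
     qvar * (\<Sum>k\<le>n. of_nat (n choose k) * qvar ^ k * \<beta> k) - \<beta> n =
       (if n = 0 then qvar - 1 else if n = 1 then 1 else 0))"

text \<open>Psi: linear form x^n \<mapsto> beta_n, extended Q(q)[z]-linearly to Q(q)[z][x]
  (outer polynomial variable = x, coefficients in Q(q)[z]).\<close>
definition Psi :: "(nat \<Rightarrow> Qq) \<Rightarrow> Qq poly poly \<Rightarrow> Qq poly" where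
  "Psi \<beta> p = (\<Sum>i\<le>degree p. smult (\<beta> i) (coeff p i))"

definition cpoly :: "Qq poly" where "cpoly = [:1, qvar - 1:]"

text \<open>beta_n(z) = Psi((z + (z(q-1)+1) x)^n).\<close>
definition qBC_poly :: "(nat \<Rightarrow> Qq) \<Rightarrow> nat \<Rightarrow> Qq poly" where
  "qBC_poly \<beta> n = Psi \<beta> ([:[:0, 1:], cpoly:] ^ n)"

definition poly_integral :: "Qq poly \<Rightarrow> Qq poly" where
  "poly_integral p = (\<Sum>i\<le>degree p. monom (coeff p i / of_nat (i + 1)) (i + 1))"

definition qint :: "nat \<Rightarrow> Qq" where "qint m = (qvar ^ m - 1) / (qvar - 1)"

definition cint :: "nat \<Rightarrow> Qq poly" where "cint m = (\<Sum>j<m. cpoly ^ j)"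

end

theory Submission
  imports Defs
begin

lemma ofnat_Qq_nz: "(of_nat (Suc n) :: Qq) \<noteq> 0"
  by (simp add: of_nat_fract Zero_fract_def eq_fract del: of_nat_Suc)

lemma qvar_pow: "qvar ^ m = Fract ([:0,1:] ^ m) 1"
  by (induction m) (simp_all add: qvar_def One_fract_def)

lemma qvar_pow_ne1: "m > 0 \<Longrightarrow> qvar ^ m \<noteq> 1"
proof
  assume "m > 0" "qvar ^ m = 1"
  hence "([:0,1:] :: rat poly) ^ m = 1"
    by (simp add: qvar_pow One_fract_def eq_fract)
  hence "degree (([:0,1:] :: rat poly) ^ m) = 0" by simp
  moreover have "degree (([:0,1:] :: rat poly) ^ m) = m"
    by (simp add: degree_power_eq)
  ultimately show False using \<open>m > 0\<close> by simp
qed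

lemma qvar_ne1: "qvar - 1 \<noteq> 0"
  using qvar_pow_ne1[of 1] by simp

definition Lf :: "(nat \<Rightarrow> Qq) \<Rightarrow> Qq poly \<Rightarrow> Qq" where
  "Lf \<beta> p = (\<Sum>i\<le>degree p. \<beta> i * coeff p i)"

lemma Lf_bound: "degree p \<le> N \<Longrightarrow> Lf \<beta> p = (\<Sum>i\<le>N. \<beta> i * coeff p i)"
  unfolding Lf_def
  by (rule sum.mono_neutral_left) (auto simp: coeff_eq_0)

lemma Lf_add: "Lf \<beta> (p + q) = Lf \<beta> p + Lf \<beta> q"
proof -
  let ?N = "max (degree p) (degree q)"
  have "Lf \<beta> (p + q) = (\<Sum>i\<le>?N. \<beta> i * coeff (p+q) i)"
    by (rule Lf_bound) (simp add: degree_add_le)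
  also have "\<dots> = (\<Sum>i\<le>?N. \<beta> i * coeff p i) + (\<Sum>i\<le>?N. \<beta> i * coeff q i)"
    by (simp add: distrib_left sum.distrib)
  also have "\<dots> = Lf \<beta> p + Lf \<beta> q"
    by (simp add: Lf_bound[of p ?N] Lf_bound[of q ?N])
  finally show ?thesis .
qed

lemma Lf_smult: "Lf \<beta> (smult a p) = a * Lf \<beta> p"
proof -
  have "Lf \<beta> (smult a p) = (\<Sum>i\<le>degree p. \<beta> i * coeff (smult a p) i)"
    by (rule Lf_bound) simp
  thus ?thesis by (simp add: Lf_def sum_distrib_left mult_ac)
qed

lemma Lf_0[simp]: "Lf \<beta> 0 = 0" by (simp add: Lf_def)

lemma Lf_sum: "Lf \<beta> (\<Sum>i\<in>A. f i) = (\<Sum>i\<in>A. Lf \<beta> (f i))"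
  by (induction A rule: infinite_finite_induct) (simp_all add: Lf_add)

lemma Lf_monom: "Lf \<beta> (monom a k) = \<beta> k * a"
proof -
  have "Lf \<beta> (monom a k) = (\<Sum>i\<le>k. \<beta> i * coeff (monom a k) i)"
    by (rule Lf_bound) (simp add: degree_monom_le)
  also have "\<dots> = \<beta> k * a" by (simp add: coeff_monom if_distrib cong: if_cong)
  finally show ?thesis .
qed

lemma pderiv_sum': "pderiv (\<Sum>i\<in>A. f i) = (\<Sum>i\<in>A. pderiv (f i))"
  by (induction A rule: infinite_finite_induct) (simp_all add: pderiv_add)

lemma Lf_lin_pow: "Lf \<beta> ([:1, a:] ^ n) = (\<Sum>k\<le>n. of_nat (n choose k) * a ^ k * \<beta> k)"
proof -
  have "[:1, a:] = monom a 1 + 1" by (simp add: monom_altdef one_pCons)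
  hence "[:1, a:] ^ n = (\<Sum>k\<le>n. of_nat (n choose k) * monom a 1 ^ k * 1 ^ (n - k))"
    by (simp add: binomial_ring)
  also have "\<dots> = (\<Sum>k\<le>n. smult (of_nat (n choose k)) (monom (a ^ k) k))"
    by (simp add: monom_power of_nat_poly)
  finally show ?thesis
    by (simp add: Lf_sum Lf_smult Lf_monom mult_ac)
qed


lemma pcompose_pow: "pcompose (p ^ n) r = (pcompose p r) ^ n"
  by (induction n) (simp_all add: pcompose_mult pcompose_1)

lemma Lf_rec_monom:
  assumes "is_qBC_numbers \<beta>"
  shows "qvar * Lf \<beta> (pcompose (monom a i) [:1,qvar:]) - Lf \<beta> (monom a i)
        = (qvar - 1) * poly (monom a i) 0 + poly (pderiv (monom a i)) 0"
proof -
  have pc: "pcompose (monom a i) [:1,qvar:] = smult a ([:1,qvar:] ^ i)"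
    by (simp add: monom_altdef pcompose_smult pcompose_pow pcompose_pCons)
  have r: "qvar * (\<Sum>k\<le>i. of_nat (i choose k) * qvar ^ k * \<beta> k) - \<beta> i =
       (if i = 0 then qvar - 1 else if i = 1 then 1 else 0)"
    using assms unfolding is_qBC_numbers_def by blast
  have "qvar * Lf \<beta> (pcompose (monom a i) [:1,qvar:]) - Lf \<beta> (monom a i)
      = a * (qvar * (\<Sum>k\<le>i. of_nat (i choose k) * qvar ^ k * \<beta> k) - \<beta> i)"
    by (simp add: pc Lf_smult Lf_lin_pow Lf_monom algebra_simps)
  also have "\<dots> = (qvar - 1) * poly (monom a i) 0 + poly (pderiv (monom a i)) 0"
    unfolding r by (cases i) (auto simp: pderiv_monom poly_monom)
  finally show ?thesis .
qed

lemma Lf_rec: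
  assumes "is_qBC_numbers \<beta>"
  shows "qvar * Lf \<beta> (pcompose p [:1,qvar:]) - Lf \<beta> p
        = (qvar - 1) * poly p 0 + poly (pderiv p) 0"
proof -
  let ?m = "\<lambda>i. monom (coeff p i) i"
  have p: "p = (\<Sum>i\<le>degree p. ?m i)" by (simp add: poly_as_sum_of_monoms)
  have "qvar * Lf \<beta> (pcompose (\<Sum>i\<le>degree p. ?m i) [:1,qvar:]) - Lf \<beta> (\<Sum>i\<le>degree p. ?m i)
     = (\<Sum>i\<le>degree p. qvar * Lf \<beta> (pcompose (?m i) [:1,qvar:]) - Lf \<beta> (?m i))"
    by (simp add: pcompose_sum Lf_sum sum_distrib_left sum_subtractf)
  also have "\<dots> = (\<Sum>i\<le>degree p. (qvar - 1) * poly (?m i) 0 + poly (pderiv (?m i)) 0)"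
    using Lf_rec_monom[OF assms] by simp
  also have "\<dots> = (qvar - 1) * poly (\<Sum>i\<le>degree p. ?m i) 0 + poly (pderiv (\<Sum>i\<le>degree p. ?m i)) 0"
    by (simp add: poly_sum pderiv_sum' sum_distrib_left sum.distrib)
  finally show ?thesis using p by simp
qed

lemma Lf_Y:
  assumes "is_qBC_numbers \<beta>"
  shows "Lf \<beta> ([:1, qvar - 1:] ^ k) = of_nat (Suc k) / qint (Suc k)"
proof -
  let ?Y = "[:1, qvar - 1:]"
  have pc: "pcompose (?Y ^ k) [:1,qvar:] = smult (qvar ^ k) (?Y ^ k)"
  proof -
    have "pcompose ?Y [:1,qvar:] = smult qvar ?Y"
      by (simp add: pcompose_pCons algebra_simps one_pCons)
    thus ?thesis by (simp only: pcompose_pow smult_power)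
  qed
  have d: "poly (pderiv (?Y ^ k)) 0 = of_nat k * (qvar - 1)"
    by (simp add: pderiv_power pderiv_pCons)
  have "qvar * (qvar ^ k * Lf \<beta> (?Y ^ k)) - Lf \<beta> (?Y ^ k) = (qvar - 1) + of_nat k * (qvar - 1)"
    using Lf_rec[OF assms, of "?Y ^ k"] by (simp add: pc Lf_smult d)
  hence "(qvar ^ Suc k - 1) * Lf \<beta> (?Y ^ k) = of_nat (Suc k) * (qvar - 1)"
    by (simp add: algebra_simps)
  moreover have "qvar ^ Suc k - 1 \<noteq> 0" using qvar_pow_ne1[of "Suc k"] by simp
  ultimately show ?thesis using qvar_ne1
    by (simp add: qint_def field_simps)
qed


lemma Psi_bound: "degree p \<le> N \<Longrightarrow> Psi \<beta> p = (\<Sum>i\<le>N. smult (\<beta> i) (coeff p i))"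
  unfolding Psi_def
  by (rule sum.mono_neutral_left) (auto simp: coeff_eq_0)

lemma Psi_0[simp]: "Psi \<beta> 0 = 0" by (simp add: Psi_def)

lemma Psi_add: "Psi \<beta> (p + q) = Psi \<beta> p + Psi \<beta> q"
proof -
  let ?N = "max (degree p) (degree q)"
  have "Psi \<beta> (p + q) = (\<Sum>i\<le>?N. smult (\<beta> i) (coeff (p+q) i))"
    by (rule Psi_bound) (simp add: degree_add_le)
  also have "\<dots> = (\<Sum>i\<le>?N. smult (\<beta> i) (coeff p i)) + (\<Sum>i\<le>?N. smult (\<beta> i) (coeff q i))"
    by (simp add: smult_add_right sum.distrib)
  also have "\<dots> = Psi \<beta> p + Psi \<beta> q"
    by (simp add: Psi_bound[of p ?N] Psi_bound[of q ?N])
  finally show ?thesis .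
qed

lemma Psi_smult: "Psi \<beta> (smult d p) = d * Psi \<beta> p"
proof -
  have "Psi \<beta> (smult d p) = (\<Sum>i\<le>degree p. smult (\<beta> i) (coeff (smult d p) i))"
    by (rule Psi_bound) simp
  thus ?thesis by (simp add: Psi_def sum_distrib_left mult_ac)
qed

lemma Psi_sum: "Psi \<beta> (\<Sum>i\<in>A. f i) = (\<Sum>i\<in>A. Psi \<beta> (f i))"
  by (induction A rule: infinite_finite_induct) (simp_all add: Psi_add)

lemma Psi_monom: "Psi \<beta> (monom a k) = smult (\<beta> k) a"
proof -
  have "Psi \<beta> (monom a k) = (\<Sum>i\<le>k. smult (\<beta> i) (coeff (monom a k) i))"
    by (rule Psi_bound) (simp add: degree_monom_le)
  also have "\<dots> = smult (\<beta> k) a" by (simp add: coeff_monom if_distrib cong: if_cong)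
  finally show ?thesis .
qed

lemma lin_pow_expand: "([:1, a:] :: 'a::comm_ring_1 poly) ^ n = (\<Sum>k\<le>n. smult (of_nat (n choose k)) (monom (a ^ k) k))"
proof -
  have "[:1, a:] = monom a 1 + 1" by (simp add: monom_altdef one_pCons)
  hence "[:1, a:] ^ n = (\<Sum>k\<le>n. of_nat (n choose k) * monom a 1 ^ k * 1 ^ (n - k))"
    by (simp add: binomial_ring)
  also have "\<dots> = (\<Sum>k\<le>n. smult (of_nat (n choose k)) (monom (a ^ k) k))"
    by (simp add: monom_power of_nat_poly)
  finally show ?thesis .
qed

lemma const_sum: "(\<Sum>j\<in>A. [:f j:]) = [:\<Sum>j\<in>A. f j:]"
  by (induction A rule: infinite_finite_induct) simp_all

lemma Psi_Yl: "Psi \<beta> ([:1, [:qvar - 1:]:] ^ k) = [:Lf \<beta> ([:1, qvar - 1:] ^ k):]"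
proof -
  have "Psi \<beta> ([:1, [:qvar - 1:]:] ^ k) = (\<Sum>j\<le>k. [:of_nat (k choose j) * (qvar - 1) ^ j * \<beta> j:])"
    by (simp add: lin_pow_expand Psi_sum Psi_smult Psi_monom poly_const_pow of_nat_poly mult_ac)
  also have "\<dots> = [:\<Sum>j\<le>k. of_nat (k choose j) * (qvar - 1) ^ j * \<beta> j:]"
    by (rule const_sum)
  finally show ?thesis by (simp add: Lf_lin_pow)
qed


lemma const_mult: "[:a:] * X = smult a X" by simp

lemma term_smult: "(of_nat c :: 'a::comm_ring_1 poly) * smult a X * (-1)^j = smult (of_nat c * (-1)^j * a) X"
proof -
  have m1: "(-1 :: 'a poly) = [:-1:]" by (simp add: one_pCons)
  have m: "(-1 :: 'a poly)^j = [:(-1)^j:]" by (simp only: m1 poly_const_pow)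
  show ?thesis by (simp add: m of_nat_poly mult_ac)
qed

lemma term_smult2: "smult a ((of_nat c :: 'a::field poly) * (-1)^j * P) = smult (of_nat c * (-1)^j * a) P"
proof -
  have m1: "(-1 :: 'a poly) = [:-1:]" by (simp add: one_pCons)
  have m: "(-1 :: 'a poly)^j = [:(-1)^j:]" by (simp only: m1 poly_const_pow)
  show ?thesis by (simp add: m of_nat_poly mult_ac)
qed

lemma qBC_expand:
  assumes "is_qBC_numbers \<beta>"
  shows "qBC_poly \<beta> n = smult (1 / (qvar - 1) ^ n)
     (\<Sum>k\<le>n. smult (of_nat (n choose k) * (-1) ^ (n - k) * (of_nat (Suc k) / qint (Suc k))) (cpoly ^ k))"
proof -
  let ?P = "[:[:0, 1:], cpoly:]"
  let ?Q = "[:[:qvar - 1:]:] :: Qq poly poly"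
  let ?Yl = "[:1, [:qvar - 1:]:] :: Qq poly poly"
  have QP: "?Q * ?P = smult cpoly ?Yl + (-1)"
    by (simp add: cpoly_def one_pCons algebra_simps)
  have "(?Q * ?P) ^ n = (\<Sum>k\<le>n. of_nat (n choose k) * (smult cpoly ?Yl) ^ k * (-1) ^ (n - k))"
    unfolding QP by (rule binomial_ring)
  also have "\<dots> = (\<Sum>k\<le>n. smult (of_nat (n choose k) * (-1) ^ (n - k) * cpoly ^ k) (?Yl ^ k))"
    by (rule sum.cong) (simp_all only: smult_power term_smult)
  finally have e: "(?Q * ?P) ^ n = \<dots>" .
  have "[:qvar - 1:] ^ n * Psi \<beta> (?P ^ n) = Psi \<beta> ((?Q * ?P) ^ n)"
    by (simp only: power_mult_distrib poly_const_pow) (simp only: const_mult Psi_smult)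
  also have "\<dots> = (\<Sum>k\<le>n. smult (of_nat (n choose k) * (-1) ^ (n - k) * (of_nat (Suc k) / qint (Suc k))) (cpoly ^ k))"
    unfolding e
    apply (simp add: Psi_sum Psi_smult Psi_Yl Lf_Y[OF assms] del: of_nat_Suc)
    apply (intro sum.cong refl)
    apply (subst term_smult2)
    apply (simp del: of_nat_Suc)
    done
  finally have "smult ((qvar - 1) ^ n) (qBC_poly \<beta> n) = \<dots>"
    by (simp add: qBC_poly_def poly_const_pow)
  thus ?thesis using qvar_ne1 by (metis (no_types) smult_smult nonzero_divide_eq_eq power_eq_0_iff mult.commute
        div_by_1 divide_self_if mult_1 smult_1_left)
qed


lemma integral_unique:
  assumes "pderiv r = p" "coeff r 0 = 0"
  shows "poly_integral p = r"
proof (rule poly_eqI)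
  fix j
  show "coeff (poly_integral p) j = coeff r j"
  proof (cases j)
    case 0
    thus ?thesis using assms(2) by (simp add: poly_integral_def coeff_sum coeff_monom)
  next
    case (Suc m)
    have "coeff (poly_integral p) j = (\<Sum>i\<le>degree p. if i = m then coeff p i / of_nat (i + 1) else 0)"
      by (simp add: poly_integral_def coeff_sum coeff_monom Suc cong: if_cong)
    also have "\<dots> = coeff p m / of_nat (Suc m)"
      by (cases "m \<le> degree p") (auto simp: coeff_eq_0)
    also have "\<dots> = coeff r j"
      using assms(1) ofnat_Qq_nz[of m]
      by (simp add: Suc coeff_pderiv[of r m, unfolded assms(1)] del: of_nat_Suc)
    finally show ?thesis .
  qed
qed

lemma xcint: "[:0, 1:] * cint m = smult (1 / (qvar - 1)) (cpoly ^ m - 1)"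
proof -
  have "cpoly - 1 = smult (qvar - 1) [:0, 1:]" by (simp add: cpoly_def one_pCons)
  hence "cpoly ^ m - 1 = smult (qvar - 1) ([:0, 1:] * cint m)"
    by (simp add: power_diff_1_eq cint_def)
  thus ?thesis using qvar_ne1 by simp
qed

lemma pderiv_xcint: "pderiv ([:0, 1:] * cint (Suc k)) = smult (of_nat (Suc k)) (cpoly ^ k)"
proof -
  have "pderiv cpoly = [:qvar - 1:]" by (simp add: cpoly_def pderiv_pCons)
  hence "pderiv (cpoly ^ Suc k - 1) = smult (of_nat (Suc k)) (cpoly ^ k) * [:qvar - 1:]"
    by (simp only: pderiv_diff pderiv_power_Suc) simp
  also have "\<dots> = smult (qvar - 1) (smult (of_nat (Suc k)) (cpoly ^ k))"
    by (simp only: mult.commute[of _ "[:qvar - 1:]"] const_mult)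
  finally show ?thesis using qvar_ne1 unfolding xcint pderiv_smult by simp
qed

theorem mainTheorem5:
  fixes \<beta> :: "nat \<Rightarrow> Qq" and n :: nat
  assumes "is_qBC_numbers \<beta>"
  shows "poly_integral (qBC_poly \<beta> n) =
    [:0, 1:] * smult (1 / (qvar - 1) ^ n)
      (\<Sum>k\<le>n. smult (of_nat (n choose k) * (-1) ^ (n - k) / qint (k + 1)) (cint (k + 1)))"
proof (rule integral_unique)
  let ?a = "\<lambda>k. of_nat (n choose k) * (-1) ^ (n - k) / qint (k + 1)"
  have T: "[:0, 1:] * smult (1 / (qvar - 1) ^ n) (\<Sum>k\<le>n. smult (?a k) (cint (k + 1)))
      = smult (1 / (qvar - 1) ^ n) (\<Sum>k\<le>n. smult (?a k) ([:0, 1:] * cint (Suc k)))"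
    by (simp add: mult_smult_right sum_distrib_left)
  show "coeff ([:0, 1:] * smult (1 / (qvar - 1) ^ n) (\<Sum>k\<le>n. smult (?a k) (cint (k + 1)))) 0 = 0"
    by simp
  show "pderiv ([:0, 1:] * smult (1 / (qvar - 1) ^ n) (\<Sum>k\<le>n. smult (?a k) (cint (k + 1))))
     = qBC_poly \<beta> n"
    unfolding T qBC_expand[OF assms] pderiv_smult pderiv_sum' pderiv_xcint smult_smult
    by (simp add: mult_ac del: of_nat_Suc)
qed

end
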